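(* Let $h$ be the unique function on pairs of disjoint subsets of $\{1,\dots,n\}$ satisfying \[ h(\emptyset,J)=\delta_{\emptyset,J},\qquad h(I,J)=e^{2b_{\iota(I)}}\sum_{K\subset J}\Bigl(\prod_{i\in K}|\zeta_{i,\iota(I)}|\Bigr)h(I'\cup K,J\setminus K)\quad\text{if }I\ne\emptyset, \] with $I'=I\setminus\{\iota(I)\}$. Then $|g(I,J)|\le h(I,J)$ for all disjoint $I,J\subset\{1,\dots,n\}$, where $g(I,J)=(\Psi^{*(-1)}*D_I\Psi)(J)$.
   Context: Fix $n\ge1$, real numbers $b_1,\dots,b_n\ge0$ and complex numbers $\zeta_{ij}=\zeta_{ji}$ such that $\prod_{i,j\in I,i<j}|1+\zeta_{ij}|\le\prod_{i\in I}e^{b_i}$ for every $I\subset\{1,\dots,n\}$. Let $\mathcal{A}$ be the set of complex functions on the power set of $\{1,\dots,n\}$, with product $f*g(I)=\sum_{J\subset I}f(J)g(I\setminus J)$, unit $1_{\mathcal A}(I)=\delta_{I,\emptyset}$; any $f$ with $f(\emptyset)\ne0$ has a unique $*$-inverse $f^{*(-1)}$. $D_If(J)=f(I\cup J)$ if $I\cap J=\emptyset$, $0$ otherwise. $\Psi(I)=\prod_{i,j\in I,i<j}(1+\zeta_{ij})$. $\iota$ assigns to each nonempty $I$ an element $\iota(I)\in I$ with $\prod_{j\in I\setminus\{\iota(I)\}}|1+\zeta_{j,\iota(I)}|\le e^{2b_{\iota(I)}}$. Empty sums are $0$, empty products are $1$. *)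

theory Defs
  imports Complex_Main
begin

text \<open>The algebra A: complex functions on subsets of {1..n} (represented as
  functions nat set => complex, only values on subsets of {1..n} matter).\<close>

definition aconv :: "(nat set \<Rightarrow> complex) \<Rightarrow> (nat set \<Rightarrow> complex) \<Rightarrow> nat set \<Rightarrow> complex" where
  "aconv f g I = (\<Sum>J\<in>Pow I. f J * g (I - J))"

definition aunit :: "nat set \<Rightarrow> complex" where
  "aunit I = (if I = {} then 1 else 0)"

definition ainv :: "nat \<Rightarrow> (nat set \<Rightarrow> complex) \<Rightarrow> nat set \<Rightarrow> complex" where
  "ainv n f = (THE g. (\<forall>I. I \<subseteq> {1..n} \<longrightarrow> aconv f g I = aunit I)
                    \<and> (\<forall>I. \<not> I \<subseteq> {1..n} \<longrightarrow> g I = 0))"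

definition Dop :: "nat set \<Rightarrow> (nat set \<Rightarrow> complex) \<Rightarrow> nat set \<Rightarrow> complex" where
  "Dop I f J = (if I \<inter> J = {} then f (I \<union> J) else 0)"

definition Psi :: "(nat \<Rightarrow> nat \<Rightarrow> complex) \<Rightarrow> nat set \<Rightarrow> complex" where
  "Psi \<zeta> I = (\<Prod>(i, j)\<in>{(i, j). i \<in> I \<and> j \<in> I \<and> i < j}. 1 + \<zeta> i j)"

end

theory Submission
  imports Defs
begin

function ginv :: "(nat set \<Rightarrow> complex) \<Rightarrow> nat set \<Rightarrow> complex" where
  "ginv f I = (if finite I \<and> I \<noteq> {} then
      - (\<Sum>J\<in>{J\<in>Pow I. J \<noteq> {}}. f J * ginv f (I - J)) else (if I = {} then 1 else 0))"
  by auto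
termination
  apply (relation "measure (\<lambda>(f, I). card I)")
   apply simp
  apply (auto intro!: psubset_card_mono)
  done

declare ginv.simps[simp del]

lemma aconv_split:
  assumes "finite I"
  shows "aconv f g I = f {} * g I + (\<Sum>J\<in>{J\<in>Pow I. J \<noteq> {}}. f J * g (I - J))"
proof -
  have eq: "Pow I = insert {} {J\<in>Pow I. J \<noteq> {}}" by auto
  have "aconv f g I = (\<Sum>J\<in>insert {} {J\<in>Pow I. J \<noteq> {}}. f J * g (I - J))"
    unfolding aconv_def by (simp only: eq[symmetric])
  also have "\<dots> = f {} * g I + (\<Sum>J\<in>{J\<in>Pow I. J \<noteq> {}}. f J * g (I - J))"
    by (subst sum.insert) (use assms in auto)
  finally show ?thesis .
qed

lemma Psi_empty: "Psi \<zeta> {} = 1"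
  unfolding Psi_def by simp

lemma ainv_prop:
  fixes f :: "nat set \<Rightarrow> complex"
  assumes f0: "f {} = 1"
  shows "(\<forall>I. I \<subseteq> {1..n} \<longrightarrow> aconv f (ainv n f) I = aunit I)
           \<and> (\<forall>I. \<not> I \<subseteq> {1..n} \<longrightarrow> ainv n f I = 0)"
proof -
  let ?P = "\<lambda>g. (\<forall>I. I \<subseteq> {1..n} \<longrightarrow> aconv f g I = aunit I)
                    \<and> (\<forall>I. \<not> I \<subseteq> {1..n} \<longrightarrow> g I = 0)"
  define g0 where "g0 I = (if I \<subseteq> {1..n} then ginv f I else 0)" for I
  have ex: "?P g0"
  proof (intro conjI allI impI)
    fix I :: "nat set" assume I: "I \<subseteq> {1..n}"
    then have fin: "finite I" using finite_subset by blast
    have "aconv f g0 I = g0 I + (\<Sum>J\<in>{J\<in>Pow I. J \<noteq> {}}. f J * g0 (I - J))"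
      using aconv_split[OF fin] f0 by simp
    also have "(\<Sum>J\<in>{J\<in>Pow I. J \<noteq> {}}. f J * g0 (I - J)) = (\<Sum>J\<in>{J\<in>Pow I. J \<noteq> {}}. f J * ginv f (I - J))"
      using I by (intro sum.cong) (auto simp: g0_def)
    finally show "aconv f g0 I = aunit I"
      using I fin by (subst (asm) g0_def, simp add: ginv.simps[of f I] aunit_def)
  next
    fix I :: "nat set" assume "\<not> I \<subseteq> {1..n}" then show "g0 I = 0" by (simp add: g0_def)
  qed
  have uniq: "g1 = g2" if 1: "?P g1" and 2: "?P g2" for g1 g2
  proof
    fix I
    show "g1 I = g2 I"
    proof (induction "card I" arbitrary: I rule: less_induct)
      case less
      show ?case
      proof (cases "I \<subseteq> {1..n}")
        case False then show ?thesis using 1 2 by auto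
      next
        case True
        then have fin: "finite I" using finite_subset by blast
        have e: "(\<Sum>J\<in>{J\<in>Pow I. J \<noteq> {}}. f J * g1 (I - J)) = (\<Sum>J\<in>{J\<in>Pow I. J \<noteq> {}}. f J * g2 (I - J))"
        proof (intro sum.cong refl)
          fix J assume "J \<in> {J\<in>Pow I. J \<noteq> {}}"
          then have "card (I - J) < card I" using fin by (auto intro!: psubset_card_mono)
          then show "f J * g1 (I - J) = f J * g2 (I - J)" using less by simp
        qed
        have "aconv f g1 I = aconv f g2 I" using 1 2 True by simp
        then show ?thesis using aconv_split[OF fin, of f] f0 e by simp
      qed
    qed
  qed
  have "?P (THE g. ?P g)" by (rule theI[of ?P g0]) (use ex uniq in auto)
  then show ?thesis unfolding ainv_def .
qed

lemma aconv_comm: "aconv f g I = aconv g f I"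
  unfolding aconv_def
  by (rule sum.reindex_bij_witness[where i = "\<lambda>J. I - J" and j = "\<lambda>J. I - J"])
     (auto simp: Diff_Diff_Int inf.absorb2 mult.commute)

lemma Psi_insert:
  assumes fin: "finite S" and iS: "i \<notin> S" and sym: "\<forall>j\<in>S. \<zeta> i j = \<zeta> j i"
  shows "Psi \<zeta> (insert i S) = Psi \<zeta> S * (\<Prod>j\<in>S. 1 + \<zeta> j i)"
proof -
  let ?P = "\<lambda>S. {(a, b). a \<in> S \<and> b \<in> S \<and> a < b}"
  let ?A = "(\<lambda>j. (j, i)) ` {j\<in>S. j < i}"
  let ?B = "(\<lambda>j. (i, j)) ` {j\<in>S. i < j}"
  have finP: "finite (?P T)" if "finite T" for T
    by (rule finite_subset[of _ "T \<times> T"]) (use that in auto)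
  have eq: "?P (insert i S) = ?P S \<union> (?A \<union> ?B)"
    using iS by auto
  have d: "?P S \<inter> (?A \<union> ?B) = {}" using iS by auto
  have d2: "?A \<inter> ?B = {}" by auto
  have "Psi \<zeta> (insert i S) = Psi \<zeta> S * ((\<Prod>(a,b)\<in>?A. 1 + \<zeta> a b) * (\<Prod>(a,b)\<in>?B. 1 + \<zeta> a b))"
    unfolding Psi_def eq
    using fin finP[OF fin] d d2
    by (simp add: prod.union_disjoint)
  also have "(\<Prod>(a,b)\<in>?A. 1 + \<zeta> a b) = (\<Prod>j\<in>{j\<in>S. j < i}. 1 + \<zeta> j i)"
    by (subst prod.reindex) (auto simp: inj_on_def)
  also have "(\<Prod>(a,b)\<in>?B. 1 + \<zeta> a b) = (\<Prod>j\<in>{j\<in>S. i < j}. 1 + \<zeta> j i)"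
    using sym by (subst prod.reindex) (auto simp: inj_on_def intro!: prod.cong)
  also have "(\<Prod>j\<in>{j\<in>S. j < i}. 1 + \<zeta> j i) * (\<Prod>j\<in>{j\<in>S. i < j}. 1 + \<zeta> j i) = (\<Prod>j\<in>S. 1 + \<zeta> j i)"
  proof -
    have "S = {j\<in>S. j < i} \<union> {j\<in>S. i < j}" using iS by (auto, metis nat_neq_iff)
    then show ?thesis using fin by (metis (no_types, lifting) prod.union_disjoint finite_Un disjoint_iff mem_Collect_eq less_asym)
  qed
  finally show ?thesis .
qed

lemma dop_rec:
  assumes fI: "finite I" and fJ: "finite J" and iI: "i \<in> I" and dj: "I \<inter> J = {}"
    and sym: "\<forall>j\<in>I \<union> J. \<zeta> i j = \<zeta> j i"
  shows "Dop I (Psi \<zeta>) J = (\<Prod>j\<in>I-{i}. 1 + \<zeta> j i) *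
     (\<Sum>K\<in>Pow J. (\<Prod>k\<in>K. \<zeta> k i) * Dop ((I-{i}) \<union> K) (Psi \<zeta>) (J-K))"
proof -
  let ?I' = "I - {i}"
  have iJ: "i \<notin> J" using iI dj by auto
  have "Dop I (Psi \<zeta>) J = Psi \<zeta> (insert i (?I' \<union> J))"
  proof -
    have "insert i (?I' \<union> J) = I \<union> J" using iI by auto
    then show ?thesis unfolding Dop_def using dj by simp
  qed
  also have "\<dots> = Psi \<zeta> (?I' \<union> J) * (\<Prod>j\<in>?I' \<union> J. 1 + \<zeta> j i)"
    by (rule Psi_insert) (use fI fJ iJ sym in auto)
  also have "(\<Prod>j\<in>?I' \<union> J. 1 + \<zeta> j i) = (\<Prod>j\<in>?I'. 1 + \<zeta> j i) * (\<Prod>j\<in>J. 1 + \<zeta> j i)"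
    by (rule prod.union_disjoint) (use fI fJ dj in auto)
  also have "(\<Prod>j\<in>J. 1 + \<zeta> j i) = (\<Prod>j\<in>J. \<zeta> j i + 1)" by (simp add: add.commute)
  also have "\<dots> = (\<Sum>K\<in>Pow J. (\<Prod>k\<in>K. \<zeta> k i) * (\<Prod>k\<in>J-K. 1))"
    by (rule prod_add[OF fJ])
  finally have 1: "Dop I (Psi \<zeta>) J = Psi \<zeta> (?I' \<union> J) * ((\<Prod>j\<in>?I'. 1 + \<zeta> j i) * (\<Sum>K\<in>Pow J. (\<Prod>k\<in>K. \<zeta> k i)))"
    by simp
  have 2: "Dop (?I' \<union> K) (Psi \<zeta>) (J-K) = Psi \<zeta> (?I' \<union> J)" if "K \<in> Pow J" for K
    unfolding Dop_def using that dj by (auto intro!: arg_cong[where f="Psi \<zeta>"])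
  show ?thesis unfolding 1 sum_distrib_left
    by (intro sum.cong refl) (simp add: 2 mult_ac)
qed

lemma g_rec:
  assumes fI: "finite I" and fJ: "finite J" and iI: "i \<in> I" and dj: "I \<inter> J = {}"
    and sym: "\<forall>j\<in>I \<union> J. \<zeta> i j = \<zeta> j i"
  shows "aconv G (Dop I (Psi \<zeta>)) J = (\<Prod>j\<in>I-{i}. 1 + \<zeta> j i) *
     (\<Sum>K\<in>Pow J. (\<Prod>k\<in>K. \<zeta> k i) * aconv G (Dop ((I-{i}) \<union> K) (Psi \<zeta>)) (J-K))"
proof -
  let ?A = "\<Prod>j\<in>I-{i}. 1 + \<zeta> j i"
  let ?z = "\<lambda>K. \<Prod>k\<in>K. \<zeta> k i"
  let ?D = "\<lambda>K. Dop ((I-{i}) \<union> K) (Psi \<zeta>)"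
  have "aconv G (Dop I (Psi \<zeta>)) J = (\<Sum>L\<in>Pow J. G L * (?A * (\<Sum>K\<in>Pow (J-L). ?z K * ?D K (J-L-K))))"
    unfolding aconv_def
    by (intro sum.cong refl arg_cong2[where f="(*)"] dop_rec) (use assms in auto)
  also have "\<dots> = ?A * (\<Sum>L\<in>Pow J. \<Sum>K\<in>{K. K \<in> Pow J \<and> L \<inter> K = {}}. G L * (?z K * ?D K (J-K-L)))"
    unfolding sum_distrib_left
    by (intro sum.cong refl) (auto simp: mult_ac Diff_eq Int_commute Int_left_commute)
  also have "(\<Sum>L\<in>Pow J. \<Sum>K\<in>{K. K \<in> Pow J \<and> L \<inter> K = {}}. G L * (?z K * ?D K (J-K-L)))
     = (\<Sum>K\<in>Pow J. \<Sum>L\<in>{L. L \<in> Pow J \<and> L \<inter> K = {}}. G L * (?z K * ?D K (J-K-L)))"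
    by (rule sum.swap_restrict) (use fJ in auto)
  also have "\<dots> = (\<Sum>K\<in>Pow J. ?z K * aconv G (?D K) (J-K))"
    unfolding aconv_def sum_distrib_left
    by (intro sum.cong refl) (auto simp: mult_ac)
  finally show ?thesis .
qed


theorem mainTheorem6:
  fixes n :: nat and b :: "nat \<Rightarrow> real" and \<zeta> :: "nat \<Rightarrow> nat \<Rightarrow> complex"
    and \<iota> :: "nat set \<Rightarrow> nat" and h :: "nat set \<Rightarrow> nat set \<Rightarrow> real"
  assumes n_ge: "n \<ge> 1"
    and b_nonneg: "\<forall>i\<in>{1..n}. b i \<ge> 0"
    and zeta_sym: "\<forall>i\<in>{1..n}. \<forall>j\<in>{1..n}. \<zeta> i j = \<zeta> j i"
    and zeta_bound: "\<forall>I. I \<subseteq> {1..n} \<longrightarrow>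
        (\<Prod>(i, j)\<in>{(i, j). i \<in> I \<and> j \<in> I \<and> i < j}. cmod (1 + \<zeta> i j)) \<le> (\<Prod>i\<in>I. exp (b i))"
    and iota: "\<forall>I. I \<subseteq> {1..n} \<longrightarrow> I \<noteq> {} \<longrightarrow>
        \<iota> I \<in> I \<and> (\<Prod>j\<in>I - {\<iota> I}. cmod (1 + \<zeta> j (\<iota> I))) \<le> exp (2 * b (\<iota> I))"
    and h_empty: "\<forall>J. J \<subseteq> {1..n} \<longrightarrow> h {} J = (if J = {} then 1 else 0)"
    and h_rec: "\<forall>I J. I \<subseteq> {1..n} \<longrightarrow> J \<subseteq> {1..n} \<longrightarrow> I \<inter> J = {} \<longrightarrow> I \<noteq> {} \<longrightarrow>
        h I J = exp (2 * b (\<iota> I)) *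
          (\<Sum>K\<in>Pow J. (\<Prod>i\<in>K. cmod (\<zeta> i (\<iota> I))) * h ((I - {\<iota> I}) \<union> K) (J - K))"
  shows "\<forall>I J. I \<subseteq> {1..n} \<longrightarrow> J \<subseteq> {1..n} \<longrightarrow> I \<inter> J = {} \<longrightarrow>
           cmod (aconv (ainv n (Psi \<zeta>)) (Dop I (Psi \<zeta>)) J) \<le> h I J"

proof -
  let ?P = "Psi \<zeta>"
  define G where "G = ainv n ?P"
  have Ginv: "\<forall>I. I \<subseteq> {1..n} \<longrightarrow> aconv ?P G I = aunit I"
    using ainv_prop[of ?P n] Psi_empty unfolding G_def by blast
  have main: "\<forall>I J. card I + 2 * card J = m \<longrightarrow> I \<subseteq> {1..n} \<longrightarrow> J \<subseteq> {1..n} \<longrightarrow> I \<inter> J = {} \<longrightarrow>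
           cmod (aconv G (Dop I ?P) J) \<le> h I J" for m
  proof (induction m rule: less_induct)
    case (less m)
    show ?case
    proof (intro allI impI)
      fix I J :: "nat set"
      assume m: "card I + 2 * card J = m" and I: "I \<subseteq> {1..n}" and J: "J \<subseteq> {1..n}" and dj: "I \<inter> J = {}"
      have fI: "finite I" and fJ: "finite J" using I J finite_subset by blast+
      show "cmod (aconv G (Dop I ?P) J) \<le> h I J"
      proof (cases "I = {}")
        case True
        have "Dop {} ?P = ?P" by (rule ext) (simp add: Dop_def)
        then have "aconv G (Dop I ?P) J = aunit J"
          using True Ginv J aconv_comm by metis
        then show ?thesis using True h_empty J by (simp add: aunit_def)
      next
        case False
        define i where "i = \<iota> I"
        have iI: "i \<in> I" and Abound: "(\<Prod>j\<in>I - {i}. cmod (1 + \<zeta> j i)) \<le> exp (2 * b i)"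
          using iota I False unfolding i_def by auto
        have sym: "\<forall>j\<in>I \<union> J. \<zeta> i j = \<zeta> j i" using zeta_sym I J iI by blast
        let ?A = "\<Prod>j\<in>I-{i}. 1 + \<zeta> j i"
        let ?g = "\<lambda>K. aconv G (Dop ((I-{i}) \<union> K) ?P) (J-K)"
        have rec: "aconv G (Dop I ?P) J = ?A * (\<Sum>K\<in>Pow J. (\<Prod>k\<in>K. \<zeta> k i) * ?g K)"
          by (rule g_rec[OF fI fJ iI dj sym])
        let ?X = "\<Sum>K\<in>Pow J. (\<Prod>k\<in>K. cmod (\<zeta> k i)) * cmod (?g K)"
        let ?Y = "\<Sum>K\<in>Pow J. (\<Prod>k\<in>K. cmod (\<zeta> k i)) * h ((I-{i}) \<union> K) (J-K)"
        have S: "cmod (\<Sum>K\<in>Pow J. (\<Prod>k\<in>K. \<zeta> k i) * ?g K) \<le> ?X"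
          by (rule order.trans[OF norm_sum]) (simp add: norm_mult prod_norm)
        have XY: "?X \<le> ?Y"
        proof (rule sum_mono)
          fix K assume K: "K \<in> Pow J"
          have fK: "finite K" using K fJ finite_subset by auto
          have cK: "card K \<le> card J" using K fJ by (simp add: card_mono)
          have c1: "card ((I-{i}) \<union> K) \<le> card I - 1 + card K"
            using card_Un_le[of "I-{i}" K] iI fI by simp
          have c2: "card (J - K) = card J - card K" using K fK by (simp add: card_Diff_subset)
          have cI: "card I \<ge> 1" using fI False by (simp add: Suc_le_eq card_gt_0_iff)
          have lt: "card ((I-{i}) \<union> K) + 2 * card (J - K) < m" using c1 c2 cK cI m by linarith
          have "cmod (?g K) \<le> h ((I-{i}) \<union> K) (J-K)"
            using less.IH[OF lt] K I J dj by blast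
          then show "(\<Prod>k\<in>K. cmod (\<zeta> k i)) * cmod (?g K) \<le> (\<Prod>k\<in>K. cmod (\<zeta> k i)) * h ((I-{i}) \<union> K) (J-K)"
            by (simp add: mult_left_mono prod_nonneg)
        qed
        have X0: "?X \<ge> 0" by (simp add: sum_nonneg prod_nonneg)
        have hIJ: "h I J = exp (2 * b i) * ?Y" using h_rec I J dj False unfolding i_def by blast
        have "cmod (aconv G (Dop I ?P) J) = cmod ?A * cmod (\<Sum>K\<in>Pow J. (\<Prod>k\<in>K. \<zeta> k i) * ?g K)"
          by (simp add: rec norm_mult)
        also have "\<dots> \<le> cmod ?A * ?X" by (rule mult_left_mono[OF S]) simp
        also have "\<dots> \<le> exp (2 * b i) * ?X"
          by (rule mult_right_mono[OF _ X0]) (use Abound in \<open>simp add: prod_norm[symmetric]\<close>)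
        also have "\<dots> \<le> exp (2 * b i) * ?Y" by (rule mult_left_mono[OF XY]) simp
        finally show ?thesis using hIJ by simp
      qed
    qed
  qed
  show ?thesis using main unfolding G_def by blast
qed

end
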